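(* Consider a ground terminal at $(p,q,h_0)$ and a UAV at $(x,y,z)$ with the altitude $z>h_0$ fixed, and let $d(x,y)=\sqrt{(x-p)^2+(y-q)^2+(z-h_0)^2}$. Let $a,b>0$, $0<\eta_{LoS}<\eta_{NLoS}$, $L>0$ and $G>0$ be constants, and define on $\mathbb{R}^2$ \[ \theta(x,y)=\tfrac{180}{\pi}\arcsin\!\Big(\tfrac{z-h_0}{d(x,y)}\Big),\quad PR(x,y)=\frac{1}{1+a\exp(-b(\theta(x,y)-a))}, \] \[ h(x,y)=\frac{G}{d(x,y)^2L\big(PR(x,y)\,\eta_{LoS}+(1-PR(x,y))\,\eta_{NLoS}\big)}. \] Fix a reference point $(x^0,y^0)\neq(p,q)$ and set $C=d(x^0,y^0)/(z-h_0)>1$. Define \[ \bar\theta(x,y)=\tfrac{180}{\pi}\Big(\arcsin(1/C)-\tfrac{1}{C\sqrt{C^2-1}}\big(\tfrac{d(x,y)}{z-h_0}-C\big)\Big),\qquad D=1+a\exp\big(-b(\bar\theta(x^0,y^0)-a)\big), \] \[ \overline{PR}(x,y)=\frac{2}{D}-\frac{1}{D^2}-\frac{a}{D^2}\exp\big(-b(\bar\theta(x,y)-a)\big),\qquad \Lambda(x,y)=d(x,y)^2L\big(\overline{PR}(x,y)\,\eta_{LoS}+(1-\overline{PR}(x,y))\,\eta_{NLoS}\big), \] and, with $\Lambda_0=\Lambda(x^0,y^0)$, \[ H(x,y)=G\Big(\frac{2}{\Lambda_0}-\frac{\Lambda(x,y)}{\Lambda_0^2}\Big). \] Then $H(x,y)\le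 h(x,y)$ for all $(x,y)\in\mathbb{R}^2$, and $H$ is concave on $\mathbb{R}^2$. In particular this holds for the UAV–BS channel gain $h_{U,B}^k$ (terminal at $(0,0,H_B)$, $G=|g_{U,B}^k|^2$, $L=L^k$) with its approximation $H_{U,B}^k$, and for the UAV–UE-$n$ channel gain $h_{n,U}^k$ (terminal at $(x_n,y_n,0)$, $G=|g_{U,n}^k|^2$, $L=L^k$) with its approximation $H_{n,U}^k$.
   Context: This is the air-to-ground channel model: $\theta$ is the elevation angle in degrees, $PR$ the line-of-sight probability with environment constants $a,b$, $\eta_{LoS},\eta_{NLoS}$ are the (linear-scale) additional attenuation factors of LoS/NLoS links, $L^k=(4\pi f^k/c)^2$ is the free-space pathloss factor of subchannel $k$, and $|g|^2>0$ is the (fixed) small-scale fading power. The BS is at $(0,0,H_B)$, UE $n$ at $(x_n,y_n,0)$, and the UAV altitude is above the terminal. The reference point $(x^0,y^0)$ is the horizontal UAV position from the previous iteration of a successive convex programming procedure. *)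

theory Defs
  imports "HOL-Analysis.Analysis"
begin

definition dUT :: "real \<Rightarrow> real \<Rightarrow> real \<Rightarrow> real \<Rightarrow> real \<Rightarrow> real \<Rightarrow> real" where
  "dUT p q h0 z x y = sqrt ((x - p)^2 + (y - q)^2 + (z - h0)^2)"

definition elev :: "real \<Rightarrow> real \<Rightarrow> real \<Rightarrow> real \<Rightarrow> real \<Rightarrow> real \<Rightarrow> real" where
  "elev p q h0 z x y = (180 / pi) * arcsin ((z - h0) / dUT p q h0 z x y)"

definition PRfun :: "real \<Rightarrow> real \<Rightarrow> real \<Rightarrow> real" where
  "PRfun a b th = 1 / (1 + a * exp (- b * (th - a)))"

definition gain :: "real \<Rightarrow> real \<Rightarrow> real \<Rightarrow> real \<Rightarrow> real \<Rightarrow> real \<Rightarrow> real \<Rightarrow> real \<Rightarrow> real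
                    \<Rightarrow> real \<Rightarrow> real \<Rightarrow> real \<Rightarrow> real" where
  "gain p q h0 z a b etaL etaN L G x y =
     (let d = dUT p q h0 z x y; P = PRfun a b (elev p q h0 z x y)
      in G / (d^2 * L * (P * etaL + (1 - P) * etaN)))"

definition Cref :: "real \<Rightarrow> real \<Rightarrow> real \<Rightarrow> real \<Rightarrow> real \<Rightarrow> real \<Rightarrow> real" where
  "Cref p q h0 z x0 y0 = dUT p q h0 z x0 y0 / (z - h0)"

definition elevbar :: "real \<Rightarrow> real \<Rightarrow> real \<Rightarrow> real \<Rightarrow> real \<Rightarrow> real \<Rightarrow> real \<Rightarrow> real \<Rightarrow> real" where
  "elevbar p q h0 z x0 y0 x y =
     (let C = Cref p q h0 z x0 y0
      in (180 / pi) * (arcsin (1 / C)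
           - 1 / (C * sqrt (C^2 - 1)) * (dUT p q h0 z x y / (z - h0) - C)))"

definition Dref :: "real \<Rightarrow> real \<Rightarrow> real \<Rightarrow> real \<Rightarrow> real \<Rightarrow> real \<Rightarrow> real \<Rightarrow> real \<Rightarrow> real" where
  "Dref p q h0 z a b x0 y0 = 1 + a * exp (- b * (elevbar p q h0 z x0 y0 x0 y0 - a))"

definition PRbar :: "real \<Rightarrow> real \<Rightarrow> real \<Rightarrow> real \<Rightarrow> real \<Rightarrow> real \<Rightarrow> real \<Rightarrow> real
                    \<Rightarrow> real \<Rightarrow> real \<Rightarrow> real" where
  "PRbar p q h0 z a b x0 y0 x y =
     (let D = Dref p q h0 z a b x0 y0
      in 2 / D - 1 / D^2 - a / D^2 * exp (- b * (elevbar p q h0 z x0 y0 x y - a)))"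

definition Lam :: "real \<Rightarrow> real \<Rightarrow> real \<Rightarrow> real \<Rightarrow> real \<Rightarrow> real \<Rightarrow> real \<Rightarrow> real \<Rightarrow> real
                    \<Rightarrow> real \<Rightarrow> real \<Rightarrow> real \<Rightarrow> real \<Rightarrow> real" where
  "Lam p q h0 z a b etaL etaN L x0 y0 x y =
     (let P = PRbar p q h0 z a b x0 y0 x y
      in (dUT p q h0 z x y)^2 * L * (P * etaL + (1 - P) * etaN))"

definition Happrox :: "real \<Rightarrow> real \<Rightarrow> real \<Rightarrow> real \<Rightarrow> real \<Rightarrow> real \<Rightarrow> real \<Rightarrow> real \<Rightarrow> real
                    \<Rightarrow> real \<Rightarrow> real \<Rightarrow> real \<Rightarrow> real \<Rightarrow> real \<Rightarrow> real" where
  "Happrox p q h0 z a b etaL etaN L G x0 y0 x y =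
     (let L0 = Lam p q h0 z a b etaL etaN L x0 y0 x0 y0
      in G * (2 / L0 - Lam p q h0 z a b etaL etaN L x0 y0 x y / L0^2))"

end

theory Submission imports Defs begin

lemma deriv_arcsin_inv:
  fixes u :: real assumes "u > 1"
  shows "((\<lambda>u. arcsin (1/u)) has_real_derivative (- 1 / (u * sqrt (u^2 - 1)))) (at u)"
proof -
  have lt: "1/u < 1" "-1 < 1/u" using assms by (auto simp: less_divide_eq)
  have "((\<lambda>u. arcsin (1/u)) has_real_derivative (inverse (sqrt (1 - (1/u)^2)) * (- 1 / u^2))) (at u)"
    using assms lt by (auto intro!: derivative_eq_intros simp: power2_eq_square)
  moreover have "sqrt (1 - (1/u)^2) = sqrt (u^2-1) / u"
  proof -
    have "1 - (1/u)^2 = (u^2 - 1) / u^2" using assms by (simp add: field_simps)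
    then show ?thesis using assms by (simp add: real_sqrt_divide)
  qed
  moreover have "sqrt (u^2 - 1) > 0" using assms by (simp add: power_less_one_iff)
  ultimately show ?thesis using assms by (simp add: field_simps power2_eq_square)
qed

lemma arcsin_tangent:
  fixes u C :: real assumes u: "u \<ge> 1" and C: "C > 1"
  shows "arcsin (1/C) - 1/(C * sqrt(C^2-1)) * (u - C) \<le> arcsin (1/u)"
proof -
  define g where "g u = arcsin (1/u) + (u - C) / (C * sqrt(C^2-1))" for u
  have sC: "sqrt (C^2-1) > 0" using C by (simp add: power_less_one_iff)
  have cont: "continuous_on {a..b} g" if "1 \<le> a" for a b
    unfolding g_def using that sC C
    by (intro continuous_intros) (auto simp: divide_le_eq le_divide_eq power_less_one_iff abs_square_eq_1)
  have dg: "(g has_real_derivative (- 1 / (x * sqrt (x^2 - 1)) + 1 / (C * sqrt(C^2-1)))) (at x)" if "x > 1" for x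
  proof -
    have "((\<lambda>u. (u - C) / (C * sqrt(C^2-1))) has_real_derivative 1 / (C * sqrt(C^2-1))) (at x)"
      using C sC by (auto intro!: derivative_eq_intros simp: abs_square_eq_1)
    from DERIV_add[OF deriv_arcsin_inv[OF that] this] show ?thesis unfolding g_def by simp
  qed
  have mono: "x * sqrt (x^2-1) \<le> y * sqrt (y^2-1)" if "1 \<le> x" "x \<le> y" for x y :: real
    using that by (intro mult_mono real_sqrt_le_mono power_mono) auto
  have pos: "x * sqrt (x^2-1) > 0" if "1 < x" for x :: real
    using that by (simp add: power_less_one_iff)
  have "g C \<le> g u"
  proof (cases "u = C")
    case True then show ?thesis by simp
  next
    case False
    show ?thesis
    proof (cases "u < C")
      case True
      from MVT[OF True cont[OF u]] dg obtain l \<xi> where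
        \<xi>: "u < \<xi>" "\<xi> < C" "(g has_real_derivative l) (at \<xi>)" "g C - g u = (C - u) * l"
        using u by (metis real_differentiable_def order.strict_trans1)
      have "l = - 1 / (\<xi> * sqrt (\<xi>^2 - 1)) + 1 / (C * sqrt(C^2-1))"
        using DERIV_unique[OF \<xi>(3) dg] \<xi> u by auto
      moreover have "1 / (C * sqrt(C^2-1)) \<le> 1 / (\<xi> * sqrt (\<xi>^2 - 1))"
        using mono[of \<xi> C] pos[of \<xi>] \<xi> u by (intro divide_left_mono) auto
      ultimately have "l \<le> 0" by simp
      moreover have "(C - u) * l \<le> 0" using True \<open>l \<le> 0\<close> by (simp add: mult_nonneg_nonpos)
      ultimately show ?thesis using \<xi> by linarith
    next
      case F: False
      with False have lt: "C < u" by simp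
      from MVT[OF lt cont] dg obtain l \<xi> where
        \<xi>: "C < \<xi>" "\<xi> < u" "(g has_real_derivative l) (at \<xi>)" "g u - g C = (u - C) * l"
        using C by (metis real_differentiable_def less_imp_le order.strict_trans)
      have "l = - 1 / (\<xi> * sqrt (\<xi>^2 - 1)) + 1 / (C * sqrt(C^2-1))"
        using DERIV_unique[OF \<xi>(3) dg] \<xi> C by auto
      moreover have "1 / (\<xi> * sqrt (\<xi>^2 - 1)) \<le> 1 / (C * sqrt(C^2-1))"
        using mono[of C \<xi>] pos[of C] \<xi> C by (intro divide_left_mono) auto
      ultimately have "l \<ge> 0" by simp
      moreover have "(u - C) * l \<ge> 0" using lt \<open>l \<ge> 0\<close> by simp
      ultimately show ?thesis using \<xi> by linarith
    qed
  qed
  then show ?thesis unfolding g_def by (simp add: field_simps)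
qed

lemma Cref_gt1:
  assumes "z > h0" "(x0, y0) \<noteq> (p, q)"
  shows "Cref p q h0 z x0 y0 > 1"
proof -
  have "(x0 - p)^2 + (y0 - q)^2 > 0" using assms(2) by (auto simp: sum_power2_gt_zero_iff)
  then have "sqrt ((z-h0)^2) < dUT p q h0 z x0 y0" unfolding dUT_def by (intro real_sqrt_less_mono) auto
  then show ?thesis using assms(1) unfolding Cref_def by (simp add: less_divide_eq)
qed

lemma dUT_ge:
  assumes "z > h0" shows "dUT p q h0 z x y \<ge> z - h0"
proof -
  have "sqrt ((z-h0)^2) \<le> dUT p q h0 z x y" unfolding dUT_def by (intro real_sqrt_le_mono) auto
  then show ?thesis using assms by simp
qed

lemma tangent_inv:
  fixes s s0 G :: real assumes "s > 0" "s0 > 0" "G > 0"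
  shows "G * (2 / s0 - s / s0^2) \<le> G / s"
proof -
  have "2 / s0 - s / s0^2 \<le> 1 / s"
  proof -
    have "1 / s - (2 / s0 - s / s0^2) = (s - s0)^2 / (s * s0^2)"
      using assms by (simp add: field_simps power2_eq_square)
    also have "\<dots> \<ge> 0" using assms by simp
    finally show ?thesis by simp
  qed
  then show ?thesis using assms mult_left_mono[of _ _ G] by fastforce
qed

lemma pointwise:
  fixes p q h0 z a b etaL etaN L x0 y0 x y :: real
  assumes "z > h0"
    and "a > 0" and "b > 0"
    and "0 < etaL" and "etaL < etaN"
    and "L > 0"
    and "(x0, y0) \<noteq> (p, q)"
  defines "P \<equiv> PRfun a b (elev p q h0 z x y)"
  defines "W \<equiv> (dUT p q h0 z x y)^2 * L * (P * etaL + (1 - P) * etaN)"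
  shows "0 < W \<and> W \<le> Lam p q h0 z a b etaL etaN L x0 y0 x y"
proof -
  define c0 where "c0 = z - h0"
  define dd where "dd = dUT p q h0 z x y"
  define C where "C = Cref p q h0 z x0 y0"
  have c0: "c0 > 0" using assms(1) c0_def by simp
  have dd: "dd \<ge> c0" using dUT_ge[OF assms(1)] unfolding dd_def c0_def .
  have C: "C > 1" using Cref_gt1[OF assms(1,7)] C_def by simp
  define u where "u = dd / c0"
  have u: "u \<ge> 1" using dd c0 by (simp add: u_def le_divide_eq)
  have eb: "elevbar p q h0 z x0 y0 x y = (180/pi) * (arcsin (1/C) - 1/(C * sqrt(C^2-1)) * (u - C))"
    unfolding elevbar_def Let_def C_def u_def dd_def c0_def by simp
  have el: "elev p q h0 z x y = (180/pi) * arcsin (1/u)"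
    unfolding elev_def u_def dd_def c0_def by simp
  have ele: "elevbar p q h0 z x0 y0 x y \<le> elev p q h0 z x y"
    unfolding eb el using arcsin_tangent[OF u C] by (intro mult_left_mono) auto
  define t where "t = a * exp (- b * (elevbar p q h0 z x0 y0 x y - a))"
  have t: "t > 0" using assms(2) t_def by simp
  have "a * exp (- b * (elev p q h0 z x y - a)) \<le> t"
    unfolding t_def using ele assms(2,3) by (intro mult_left_mono) auto
  then have P1: "1 / (1 + t) \<le> P" unfolding P_def PRfun_def
    using t assms(2) by (intro divide_left_mono) (auto intro!: mult_pos_pos add_pos_pos)
  define D where "D = Dref p q h0 z a b x0 y0"
  have D: "D > 0" unfolding D_def Dref_def using assms(2) by (simp add: add_pos_pos)
  have PB: "PRbar p q h0 z a b x0 y0 x y = 2 / D - (1 + t) / D^2"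
    unfolding PRbar_def Let_def D_def[symmetric] t_def by (simp add: add_divide_distrib)
  have "2 / D - (1 + t) / D^2 \<le> 1 / (1 + t)"
  proof -
    have "1 / (1+t) - (2 / D - (1 + t) / D^2) = ((1+t) - D)^2 / ((1+t) * D^2)"
      using D t by (simp add: field_simps power2_eq_square)
    also have "\<dots> \<ge> 0" using D t by simp
    finally show ?thesis by simp
  qed
  then have PBle: "PRbar p q h0 z a b x0 y0 x y \<le> P" using PB P1 by simp
  have P01: "0 \<le> P" "P \<le> 1" unfolding P_def PRfun_def using assms(2)
    by (auto simp: add_pos_pos)
  have "P * etaL + (1 - P) * etaN \<ge> etaL"
  proof -
    have "P * etaL + (1 - P) * etaN - etaL = (1 - P) * (etaN - etaL)" by (simp add: algebra_simps)
    also have "\<dots> \<ge> 0" using P01 assms(5) by simp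
    finally show ?thesis by simp
  qed
  then have pos: "P * etaL + (1 - P) * etaN > 0" using assms(4) by linarith
  have ddp: "dd > 0" using dd c0 by simp
  have W: "W > 0" unfolding W_def dd_def[symmetric] using pos ddp assms(6) by simp
  let ?Q = "PRbar p q h0 z a b x0 y0 x y"
  have "?Q * etaL + (1 - ?Q) * etaN - (P * etaL + (1 - P) * etaN) = (P - ?Q) * (etaN - etaL)"
    by (simp add: algebra_simps)
  also have "\<dots> \<ge> 0" using PBle assms(5) by simp
  finally have "P * etaL + (1 - P) * etaN \<le> ?Q * etaL + (1 - ?Q) * etaN" by simp
  then have "W \<le> Lam p q h0 z a b etaL etaN L x0 y0 x y"
    unfolding W_def Lam_def Let_def using assms(6) by (intro mult_left_mono) auto
  with W show ?thesis by simp
qed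

lemma psi_convex:
  fixes c g :: real assumes "g \<ge> 0"
  shows "convex_on {0..} (\<lambda>s. s^2 * exp (c + g * s))"
proof (rule f''_ge0_imp_convex)
  show "((\<lambda>s. s^2 * exp (c + g * s)) has_real_derivative
        (2 * s * exp (c + g * s) + g * s^2 * exp (c + g * s))) (at s)" for s
    by (auto intro!: derivative_eq_intros simp: algebra_simps power2_eq_square)
  show "((\<lambda>s. 2 * s * exp (c + g * s) + g * s^2 * exp (c + g * s)) has_real_derivative
        (2 * exp (c + g * s) + 4 * g * s * exp (c + g * s) + g^2 * s^2 * exp (c + g * s))) (at s)" for s
    by (auto intro!: derivative_eq_intros simp: algebra_simps power2_eq_square)
  show "0 \<le> 2 * exp (c + g * s) + 4 * g * s * exp (c + g * s) + g^2 * s^2 * exp (c + g * s)"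
    if "s \<in> {0..}" for s using that assms by (intro add_nonneg_nonneg) auto
qed auto

lemma psi_mono:
  fixes c g s t :: real assumes "g \<ge> 0" "0 \<le> s" "s \<le> t"
  shows "s^2 * exp (c + g * s) \<le> t^2 * exp (c + g * t)"
  using assms by (intro mult_mono power_mono) (auto intro: mult_left_mono)

lemma dist_convex:
  fixes p q w :: real
  shows "convex_on UNIV (\<lambda>v::real\<times>real. sqrt ((fst v - p)^2 + (snd v - q)^2 + w^2))"
proof -
  define f where "f v = ((fst v - p, snd v - q), w)" for v :: "real \<times> real"
  have eq: "sqrt ((fst v - p)^2 + (snd v - q)^2 + w^2) = norm (f v)" for v
    unfolding f_def by (simp add: norm_Pair)
  have lin: "f ((1 - t) *\<^sub>R x + t *\<^sub>R y) = (1 - t) *\<^sub>R f x + t *\<^sub>R f y" for t x y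
    unfolding f_def by (simp add: algebra_simps)
  show ?thesis unfolding eq
  proof (rule convex_onI)
    fix t :: real and x y :: "real \<times> real" assume t: "0 < t" "t < 1"
    have "norm (f ((1 - t) *\<^sub>R x + t *\<^sub>R y)) \<le> norm ((1 - t) *\<^sub>R f x) + norm (t *\<^sub>R f y)"
      unfolding lin by (rule norm_triangle_ineq)
    then show "norm (f ((1 - t) *\<^sub>R x + t *\<^sub>R y)) \<le> (1 - t) * norm (f x) + t * norm (f y)"
      using t by simp
  qed auto
qed

lemma convex_compose_mono:
  fixes d :: "'a::real_vector \<Rightarrow> real" and phi :: "real \<Rightarrow> real"
  assumes "convex_on UNIV d" "\<And>v. d v \<ge> 0" "convex_on {0..} phi"
    and "\<And>s t. 0 \<le> s \<Longrightarrow> s \<le> t \<Longrightarrow> phi s \<le> phi t"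
  shows "convex_on UNIV (\<lambda>v. phi (d v))"
proof (rule convex_onI)
  fix t :: real and x y :: 'a assume t: "0 < t" "t < 1"
  have "d ((1 - t) *\<^sub>R x + t *\<^sub>R y) \<le> (1 - t) * d x + t * d y"
    using convex_onD[OF assms(1)] t by auto
  then have "phi (d ((1 - t) *\<^sub>R x + t *\<^sub>R y)) \<le> phi ((1 - t) * d x + t * d y)"
    using assms(2,4) by blast
  also have "\<dots> \<le> (1 - t) * phi (d x) + t * phi (d y)"
    using convex_onD[OF assms(3), of t "d x" "d y"] t assms(2) by (simp add: algebra_simps)
  finally show "phi (d ((1 - t) *\<^sub>R x + t *\<^sub>R y)) \<le> (1 - t) * phi (d x) + t * phi (d y)" .
qed auto

theorem theorem1:
  fixes p q h0 z a b etaL etaN L G x0 y0 :: real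
  assumes "z > h0"
    and "a > 0" and "b > 0"
    and "0 < etaL" and "etaL < etaN"
    and "L > 0" and "G > 0"
    and "(x0, y0) \<noteq> (p, q)"
  shows "(\<forall>x y. Happrox p q h0 z a b etaL etaN L G x0 y0 x y \<le> gain p q h0 z a b etaL etaN L G x y)
       \<and> concave_on UNIV (\<lambda>(x, y). Happrox p q h0 z a b etaL etaN L G x0 y0 x y)"
proof
  define L0 where "L0 = Lam p q h0 z a b etaL etaN L x0 y0 x0 y0"
  have L0: "L0 > 0" using pointwise[OF assms(1-6,8), of x0 y0] L0_def by linarith
  have H: "Happrox p q h0 z a b etaL etaN L G x0 y0 x y = G * (2 / L0 - Lam p q h0 z a b etaL etaN L x0 y0 x y / L0^2)" for x y
    unfolding Happrox_def L0_def Let_def by (rule refl)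
  show "\<forall>x y. Happrox p q h0 z a b etaL etaN L G x0 y0 x y \<le> gain p q h0 z a b etaL etaN L G x y"
  proof (intro allI)
    fix x y
    define P where "P = PRfun a b (elev p q h0 z x y)"
    define W where "W = (dUT p q h0 z x y)^2 * L * (P * etaL + (1 - P) * etaN)"
    have W: "0 < W" "W \<le> Lam p q h0 z a b etaL etaN L x0 y0 x y"
      using pointwise[OF assms(1-6,8), of x y] unfolding P_def W_def by auto
    have "Happrox p q h0 z a b etaL etaN L G x0 y0 x y \<le> G / Lam p q h0 z a b etaL etaN L x0 y0 x y"
      unfolding H using W L0 assms(7) by (intro tangent_inv) auto
    also have "\<dots> \<le> G / W" using W assms(7) by (intro divide_left_mono) auto
    also have "G / W = gain p q h0 z a b etaL etaN L G x y"
      unfolding gain_def Let_def W_def P_def by simp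
    finally show "Happrox p q h0 z a b etaL etaN L G x0 y0 x y \<le> gain p q h0 z a b etaL etaN L G x y" .
  qed
  define c0 where "c0 = z - h0"
  have c0: "c0 > 0" using assms(1) c0_def by simp
  define C where "C = Cref p q h0 z x0 y0"
  have C: "C > 1" using Cref_gt1[OF assms(1,8)] C_def by simp
  define sq where "sq = sqrt (C^2 - 1)"
  have sq: "sq > 0" using C sq_def by (simp add: power_less_one_iff)
  define D where "D = Dref p q h0 z a b x0 y0"
  have D: "D > 0" unfolding D_def Dref_def using assms(2) by (simp add: add_pos_pos)
  define k where "k = etaN - etaL"
  have k: "k > 0" using assms(5) k_def by simp
  define A where "A = L * (etaN - k * (2/D - 1/D^2))"
  define B where "B = L * k * a / D^2"
  define g where "g = b * (180/pi) / (C * sq * c0)"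
  define c where "c = - b * ((180/pi) * (arcsin (1/C) + 1/sq) - a)"
  define phi where "phi s = A * s^2 + B * (s^2 * exp (c + g * s))" for s
  define dv where "dv v = dUT p q h0 z (fst v) (snd v)" for v :: "real \<times> real"
  have A: "A \<ge> 0"
  proof -
    have "2/D - 1/D^2 \<le> 1"
    proof -
      have "1 - (2/D - 1/D^2) = (1 - 1/D)^2" using D by (simp add: field_simps power2_eq_square)
      then show ?thesis by (metis diff_ge_0_iff_ge zero_le_power2)
    qed
    then have "k * (2/D - 1/D^2) \<le> k" using k by (simp add: mult_left_le)
    then show ?thesis unfolding A_def using assms(4,6) k_def by simp
  qed
  have B: "B \<ge> 0" unfolding B_def using assms(2,6) k by simp
  have g: "g \<ge> 0" unfolding g_def using assms(3) C sq c0 by simp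
  have Lamphi: "Lam p q h0 z a b etaL etaN L x0 y0 x y = phi (dUT p q h0 z x y)" for x y
  proof -
    define dd where "dd = dUT p q h0 z x y"
    have e: "- b * (elevbar p q h0 z x0 y0 x y - a) = c + g * dd"
      unfolding elevbar_def Let_def C_def[symmetric] sq_def[symmetric] c_def g_def dd_def[symmetric]
        c0_def[symmetric] using C sq c0 by (simp add: field_simps)
    show ?thesis unfolding Lam_def PRbar_def Let_def e D_def[symmetric] phi_def dd_def[symmetric]
      A_def B_def k_def using D by (simp add: field_simps power2_eq_square)
  qed
  have cphi: "convex_on {0..} phi"
    unfolding phi_def
    by (intro convex_on_add convex_on_cmul A B psi_convex g
        convex_on_subset[OF convex_power_even[of 2]]) auto
  have mphi: "phi s \<le> phi t" if "0 \<le> s" "s \<le> t" for s t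
    unfolding phi_def using that A B psi_mono[OF g that]
    by (intro add_mono mult_left_mono power_mono) auto
  have cdv: "convex_on UNIV dv"
    unfolding dv_def dUT_def by (rule dist_convex)
  have dv0: "dv v \<ge> 0" for v unfolding dv_def dUT_def by simp
  have cL: "convex_on UNIV (\<lambda>v. phi (dv v))"
    by (rule convex_compose_mono[OF cdv dv0 cphi mphi])
  have eqf: "(\<lambda>v. - (case v of (x, y) \<Rightarrow> Happrox p q h0 z a b etaL etaN L G x0 y0 x y))
        = (\<lambda>v. (G / L0^2) * phi (dv v) + (- (2 * G / L0)))"
    by (auto simp: H Lamphi dv_def algebra_simps fun_eq_iff)
  show "concave_on UNIV (\<lambda>(x, y). Happrox p q h0 z a b etaL etaN L G x0 y0 x y)"
    unfolding concave_on_def eqf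
    using assms(7) L0 by (intro convex_on_add convex_on_cmul cL) (auto simp: convex_on_const)
qed

end
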